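(* There exists a language which is accepted by a GLLOWJFA but not by any LOWJFA, and hence LOWJ ⊂ GLLOWJ (proper inclusion).
   Context: A left one-way jumping finite automaton (LOWJFA) is a tuple A = (Σ, Q, q_0, F, R) with alphabet Σ, finite state set Q, start state q_0, final states F ⊆ Q, and rules R ⊆ Q × Σ × Q; a rule (q,a,p) means the automaton goes from state p to state q deleting a, and for each p and a there is at most one such q. For p ∈ Q let Σ_p = {b ∈ Σ : (q,b,p) ∈ R for some q}. Configurations are strings in Σ^* Q; for (q,a,p) ∈ R, x ∈ (Σ \ Σ_p)^* and y ∈ Σ^*, the automaton moves from yaxp to xyq. The accepted language is the set of words w such that w q_0 leads in zero or more moves to q_f for some q_f ∈ F. A generalized left linear one-way jumping finite automaton (GLLOWJFA) is a tuple A = (Σ, Q, q_0, F, R) where R ⊂ Q × Σ^+ × Q is finite; a rule (q,w,p) means from p, delete w, go to q, and for each p ∈ Q and w ∈ Σ^+ there is at most one such q. For p ∈ Q let Σ_p = {w ∈ Σ^+ : (q,w,p) ∈ R for some q}. Configurations are strings in Σ^* Q Σ^*, and the moves are: (1) for t,u,v ∈ Σ^* and (q,x,p) ∈ R, the configuration vxupt moves to vqut, provided u contains no word of Σ_p as a subword and there is no nonempty prefix u_1 of u and nonempty suffix x_2 of x with x_2u_1 = x; (2) for x ∈ Σ^+ and y ∈ Σ^* such that y contains no word of Σ_p as a subword, ypx moves to yxp. The accepted language is {w ∈ Σ^* : w q_0 leads in zero or more moves to q_f for some q_f ∈ F}. LOWJ and GLLOWJ denote the classes of languages accepted by LOWJFA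 and GLLOWJFA respectively. A LOWJFA is exactly a GLLOWJFA all of whose rules delete words of length 1, so LOWJ ⊆ GLLOWJ. *)

theory Defs
  imports Main "HOL-Library.Sublist"
begin

text \<open>An automaton is given by (Sigma, Q, q0, F, R); a rule (q,a,p) in R means:
  from state p, delete a, go to state q.  States are taken from type nat.\<close>

definition lowjfa :: "'a set \<Rightarrow> 's set \<Rightarrow> 's \<Rightarrow> 's set \<Rightarrow> ('s \<times> 'a \<times> 's) set \<Rightarrow> bool" where
  "lowjfa Sig Q q0 F R \<longleftrightarrow>
     finite Sig \<and> finite Q \<and> q0 \<in> Q \<and> F \<subseteq> Q \<and> R \<subseteq> Q \<times> Sig \<times> Q \<and>
     (\<forall>p a q q'. (q, a, p) \<in> R \<longrightarrow> (q', a, p) \<in> R \<longrightarrow> q = q')"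

definition lsig :: "('s \<times> 'a \<times> 's) set \<Rightarrow> 's \<Rightarrow> 'a set" where
  "lsig R p = {b. \<exists>q. (q, b, p) \<in> R}"

definition lowj_step :: "'a set \<Rightarrow> ('s \<times> 'a \<times> 's) set \<Rightarrow> ('a list \<times> 's) \<Rightarrow> ('a list \<times> 's) \<Rightarrow> bool" where
  "lowj_step Sig R c c' \<longleftrightarrow>
     (\<exists>q a p x y. (q, a, p) \<in> R \<and> x \<in> lists (Sig - lsig R p) \<and> y \<in> lists Sig \<and>
        c = (y @ [a] @ x, p) \<and> c' = (x @ y, q))"

definition lowj_lang :: "'a set \<Rightarrow> 's set \<Rightarrow> 's \<Rightarrow> 's set \<Rightarrow> ('s \<times> 'a \<times> 's) set \<Rightarrow> 'a list set" where
  "lowj_lang Sig Q q0 F R =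
     {w \<in> lists Sig. \<exists>qf \<in> F. (lowj_step Sig R)\<^sup>*\<^sup>* (w, q0) ([], qf)}"

definition LOWJ :: "'a list set set" where
  "LOWJ = {L. \<exists>Sig (Q :: nat set) q0 F R. lowjfa Sig Q q0 F R \<and> L = lowj_lang Sig Q q0 F R}"

definition gllowjfa :: "'a set \<Rightarrow> 's set \<Rightarrow> 's \<Rightarrow> 's set \<Rightarrow> ('s \<times> 'a list \<times> 's) set \<Rightarrow> bool" where
  "gllowjfa Sig Q q0 F R \<longleftrightarrow>
     finite Sig \<and> finite Q \<and> q0 \<in> Q \<and> F \<subseteq> Q \<and> finite R \<and>
     R \<subseteq> Q \<times> (lists Sig - {[]}) \<times> Q \<and>
     (\<forall>p w q q'. (q, w, p) \<in> R \<longrightarrow> (q', w, p) \<in> R \<longrightarrow> q = q')"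

definition gsig :: "('s \<times> 'a list \<times> 's) set \<Rightarrow> 's \<Rightarrow> 'a list set" where
  "gsig R p = {w. w \<noteq> [] \<and> (\<exists>q. (q, w, p) \<in> R)}"

definition no_factor :: "'a list set \<Rightarrow> 'a list \<Rightarrow> bool" where
  "no_factor S u \<longleftrightarrow> \<not> (\<exists>w \<in> S. sublist w u)"

definition gl_step :: "'a set \<Rightarrow> ('s \<times> 'a list \<times> 's) set \<Rightarrow>
    ('a list \<times> 's \<times> 'a list) \<Rightarrow> ('a list \<times> 's \<times> 'a list) \<Rightarrow> bool" where
  "gl_step Sig R c c' \<longleftrightarrow>
     (\<exists>q x p t u v. (q, x, p) \<in> R \<and> t \<in> lists Sig \<and> u \<in> lists Sig \<and> v \<in> lists Sig \<and>
        no_factor (gsig R p) u \<and>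
        \<not> (\<exists>u1 u2 x1 x2. u1 \<noteq> [] \<and> x2 \<noteq> [] \<and> u = u1 @ u2 \<and> x = x1 @ x2 \<and> x2 @ u1 = x) \<and>
        c = (v @ x @ u, p, t) \<and> c' = (v, q, u @ t))
   \<or> (\<exists>p x y. x \<noteq> [] \<and> x \<in> lists Sig \<and> y \<in> lists Sig \<and> no_factor (gsig R p) y \<and>
        c = (y, p, x) \<and> c' = (y @ x, p, []))"

definition gl_lang :: "'a set \<Rightarrow> 's set \<Rightarrow> 's \<Rightarrow> 's set \<Rightarrow> ('s \<times> 'a list \<times> 's) set \<Rightarrow> 'a list set" where
  "gl_lang Sig Q q0 F R =
     {w \<in> lists Sig. \<exists>qf \<in> F. (gl_step Sig R)\<^sup>*\<^sup>* (w, q0, []) ([], qf, [])}"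

definition GLLOWJ :: "'a list set set" where
  "GLLOWJ = {L. \<exists>Sig (Q :: nat set) q0 F R. gllowjfa Sig Q q0 F R \<and> L = gl_lang Sig Q q0 F R}"

end

theory Submission
  imports Defs
begin


definition RW :: "(nat \<times> nat list \<times> nat) set" where "RW = {(0,[0,1],0)}"

definition bad :: "nat list \<Rightarrow> bool" where
  "bad w \<longleftrightarrow> length (filter ((=) 0) w) \<noteq> length (filter ((=) 1) w) \<or> (w \<noteq> [] \<and> hd w = 1)"

lemma RW_step:
  assumes "gl_step S RW c d"
  shows "fst d @ snd (snd d) = fst c @ snd (snd c) \<or>
    (\<exists>s t. fst c @ snd (snd c) = s @ [0,1] @ t \<and> fst d @ snd (snd d) = s @ t)"
  using assms unfolding gl_step_def RW_def by (elim disjE exE conjE; force)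

lemma bad_del: "bad (s @ [0,1] @ t) \<Longrightarrow> bad (s @ t)"
  unfolding bad_def by (cases s) auto

lemma RW_star:
  assumes "(gl_step S RW)\<^sup>*\<^sup>* c d" "bad (fst c @ snd (snd c))"
  shows "bad (fst d @ snd (snd d))"
  using assms
proof (induction rule: rtranclp_induct)
  case base then show ?case by simp
next
  case (step y z)
  then show ?case using RW_step[OF step(2)] bad_del by metis
qed

lemma RW_notin: "bad w \<Longrightarrow> w \<notin> gl_lang S Q q0 F RW"
proof
  assume b: "bad w" and "w \<in> gl_lang S Q q0 F RW"
  then obtain qf where "(gl_step S RW)\<^sup>*\<^sup>* (w, q0, []) ([], qf, [])"
    unfolding gl_lang_def by auto
  from RW_star[OF this] b have "bad []" by simp
  then show False unfolding bad_def by simp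
qed

lemma overlap01: "x2 \<noteq> [] \<Longrightarrow> u1 \<noteq> [] \<Longrightarrow> [0::nat,1] = x1 @ x2 \<Longrightarrow> x2 @ u1 = [0,1] \<Longrightarrow> False"
  by (cases x1) (auto simp: Cons_eq_append_conv append_eq_Cons_conv)

lemma RW_run: "(gl_step {0,1} RW)\<^sup>*\<^sup>* (replicate n 0 @ replicate n 1, 0, []) ([], 0, [])"
proof (induction n)
  case 0 then show ?case by simp
next
  case (Suc n)
  have e: "replicate (Suc n) (0::nat) @ replicate (Suc n) 1 = replicate n 0 @ [0,1] @ replicate n 1"
    by (simp add: replicate_append_same[symmetric])
  have nf: "no_factor (gsig RW 0) (replicate n 1)"
    unfolding no_factor_def gsig_def RW_def using set_mono_sublist by fastforce
  have s1: "gl_step {0,1} RW (replicate n 0 @ [0,1] @ replicate n 1, 0, []) (replicate n 0, 0, replicate n 1 @ [])"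
    unfolding gl_step_def
    apply (rule disjI1)
    apply (rule exI[of _ 0], rule exI[of _ "[0,1]"], rule exI[of _ 0], rule exI[of _ "[]"],
        rule exI[of _ "replicate n 1"], rule exI[of _ "replicate n 0"])
    using nf overlap01 by (auto simp: RW_def)
  show ?case
  proof (cases n)
    case 0
    then show ?thesis using s1 e by simp
  next
    case (Suc m)
    have nf2: "no_factor (gsig RW 0) (replicate n 0)"
      unfolding no_factor_def gsig_def RW_def using set_mono_sublist by fastforce
    have s2: "gl_step {0,1} RW (replicate n 0, 0, replicate n 1) (replicate n 0 @ replicate n 1, 0, [])"
      unfolding gl_step_def
      apply (rule disjI2)
      using nf2 Suc by auto
    show ?thesis using s1 s2 Suc.IH e
      by (metis append_Nil2 converse_rtranclp_into_rtranclp)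
  qed
qed

lemma RW_in: "replicate n 0 @ replicate n 1 \<in> gl_lang {0,1} {0} 0 {0} RW"
  unfolding gl_lang_def using RW_run by auto

lemma RW_auto: "gllowjfa {0,1} {0::nat} 0 {0} RW"
  unfolding gllowjfa_def RW_def by auto

lemma RW_GL: "gl_lang {0,1} {0} 0 {0} RW \<in> GLLOWJ"
  unfolding GLLOWJ_def using RW_auto by blast

lemma bad1: "m \<noteq> n \<Longrightarrow> bad (replicate m 0 @ replicate n 1)"
  unfolding bad_def by simp

lemma bad2: "bad (1 # w)"
  unfolding bad_def by simp



lemma rot:
  assumes "set y \<inter> lsig R p = {}" "y \<in> lists Sig" "x \<in> lists Sig"
  shows "lowj_step Sig R (y @ x, p) c \<longleftrightarrow> lowj_step Sig R (x @ y, p) c"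
proof
  assume "lowj_step Sig R (y @ x, p) c"
  then obtain q a X Y where r: "(q, a, p) \<in> R" "X \<in> lists (Sig - lsig R p)" "Y \<in> lists Sig"
    "y @ x = Y @ [a] @ X" "c = (X @ Y, q)" unfolding lowj_step_def by blast
  have al: "a \<in> lsig R p" using r(1) unfolding lsig_def by blast
  from r(4) consider us where "y = Y @ us" "us @ x = [a] @ X" | us where "y @ us = Y" "x = us @ [a] @ X"
    using append_eq_append_conv2[THEN iffD1, OF r(4)] by metis
  then show "lowj_step Sig R (x @ y, p) c"
  proof cases
    case 1
    have "us = []" using 1 al assms(1) by (cases us) auto
    then have "x @ y = [] @ [a] @ (X @ y)" "c = ((X @ y) @ [], q)" using 1 r by auto
    moreover have "X @ y \<in> lists (Sig - lsig R p)" using r(2) assms(1,2) by auto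
    ultimately show ?thesis unfolding lowj_step_def using r(1) by blast
  next
    case 2
    have "x @ y = us @ [a] @ (X @ y)" "c = ((X @ y) @ us, q)" using 2 r by auto
    moreover have "X @ y \<in> lists (Sig - lsig R p)" using r(2) assms(1,2) by auto
    moreover have "us \<in> lists Sig" using 2 assms(3) by auto
    ultimately show ?thesis unfolding lowj_step_def using r(1) by blast
  qed
next
  assume "lowj_step Sig R (x @ y, p) c"
  then obtain q a X Y where r: "(q, a, p) \<in> R" "X \<in> lists (Sig - lsig R p)" "Y \<in> lists Sig"
    "x @ y = Y @ [a] @ X" "c = (X @ Y, q)" unfolding lowj_step_def by blast
  have al: "a \<in> lsig R p" using r(1) unfolding lsig_def by blast
  from r(4) consider us where "x = Y @ us" "us @ y = [a] @ X" | us where "x @ us = Y" "y = us @ [a] @ X"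
    using append_eq_append_conv2[THEN iffD1, OF r(4)] by metis
  then show "lowj_step Sig R (y @ x, p) c"
  proof cases
    case 1
    then obtain us' where us: "us = a # us'" using al assms(1) by (cases us) auto
    then have "y @ x = (y @ Y) @ [a] @ us'" "c = (us' @ (y @ Y), q)" using 1 r by auto
    moreover have "us' \<in> lists (Sig - lsig R p)" using r(2) 1 us by auto
    moreover have "y @ Y \<in> lists Sig" using assms(2) r(3) by auto
    ultimately show ?thesis unfolding lowj_step_def using r(1) by blast
  next
    case 2
    then show ?thesis using al assms(1) by auto
  qed
qed



definition acc :: "'a set \<Rightarrow> 's set \<Rightarrow> ('s \<times> 'a \<times> 's) set \<Rightarrow> 'a list \<Rightarrow> 's \<Rightarrow> bool" where
  "acc Sig F R w p \<longleftrightarrow> (\<exists>qf\<in>F. (lowj_step Sig R)\<^sup>*\<^sup>* (w, p) ([], qf))"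

lemma acc_first:
  assumes "w \<noteq> []"
  shows "acc Sig F R w p \<longleftrightarrow> (\<exists>c. lowj_step Sig R (w, p) c \<and> (\<exists>qf\<in>F. (lowj_step Sig R)\<^sup>*\<^sup>* c ([], qf)))"
proof
  assume "acc Sig F R w p"
  then obtain qf where qf: "qf \<in> F" "(lowj_step Sig R)\<^sup>*\<^sup>* (w, p) ([], qf)" unfolding acc_def by blast
  from qf(2) show "\<exists>c. lowj_step Sig R (w, p) c \<and> (\<exists>qf\<in>F. (lowj_step Sig R)\<^sup>*\<^sup>* c ([], qf))"
  proof (cases rule: converse_rtranclpE)
    case base then show ?thesis using assms by simp
  next
    case (step c) then show ?thesis using qf(1) by blast
  qed
next
  assume "\<exists>c. lowj_step Sig R (w, p) c \<and> (\<exists>qf\<in>F. (lowj_step Sig R)\<^sup>*\<^sup>* c ([], qf))"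
  then show "acc Sig F R w p" unfolding acc_def by (meson converse_rtranclp_into_rtranclp)
qed

lemma acc_rot:
  assumes "set y \<inter> lsig R p = {}" "y \<in> lists Sig" "x \<in> lists Sig" "y @ x \<noteq> []"
  shows "acc Sig F R (y @ x) p \<longleftrightarrow> acc Sig F R (x @ y) p"
proof -
  have ne: "x @ y \<noteq> []" using assms(4) by auto
  have r: "\<And>c. lowj_step Sig R (y @ x, p) c \<longleftrightarrow> lowj_step Sig R (x @ y, p) c" using rot[OF assms(1-3)] by blast
  show ?thesis unfolding acc_first[OF assms(4)] acc_first[OF ne] r ..
qed

lemma acc_last:
  assumes "lowjfa Sig Q q0 F R" "b \<in> lsig R p" "(q, b, p) \<in> R" "w \<in> lists Sig"
  shows "acc Sig F R (w @ [b]) p \<longleftrightarrow> acc Sig F R w q"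
proof -
  have st: "lowj_step Sig R (w @ [b], p) c \<longleftrightarrow> c = (w, q)" for c
  proof
    assume "lowj_step Sig R (w @ [b], p) c"
    then obtain q' a X Y where r: "(q', a, p) \<in> R" "X \<in> lists (Sig - lsig R p)" "Y \<in> lists Sig"
      "w @ [b] = Y @ [a] @ X" "c = (X @ Y, q')" unfolding lowj_step_def by blast
    have "X = []"
    proof (rule ccontr)
      assume "X \<noteq> []"
      have "last (w @ [b]) = last (Y @ [a] @ X)" using r(4) by simp
      then have "last X = b" using \<open>X \<noteq> []\<close> by simp
      then have "b \<in> set X" using \<open>X \<noteq> []\<close> by auto
      then show False using r(2) assms(2) by auto
    qed
    then have "w @ [b] = Y @ [a]" using r(4) by simp
    then have ab: "a = b" "Y = w" by simp_all
    have det: "\<And>q1 q2. (q1,b,p)\<in>R \<Longrightarrow> (q2,b,p)\<in>R \<Longrightarrow> q1=q2" using assms(1) unfolding lowjfa_def by blast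
    have "q' = q" using det[OF _ assms(3)] r(1) ab by simp
    then show "c = (w, q)" using r(5) ab \<open>X = []\<close> by simp
  next
    assume c: "c = (w, q)"
    have "lowj_step Sig R (w @ [b], p) (w, q)" unfolding lowj_step_def
      apply (rule exI[of _ q], rule exI[of _ b], rule exI[of _ p], rule exI[of _ "[]"], rule exI[of _ w])
      using assms(3,4) by simp
    then show "lowj_step Sig R (w @ [b], p) c" using c by simp
  qed
  have ne: "w @ [b] \<noteq> []" by simp
  show ?thesis unfolding acc_first[OF ne] st unfolding acc_def by simp
qed



lemma not_lowj: "gl_lang {0,1} {0} 0 {0} RW \<notin> (LOWJ :: nat list set set)"
proof
  let ?L = "gl_lang {0,1} {0::nat} 0 {0} RW"
  assume "?L \<in> LOWJ"
  then obtain Sig and Q :: "nat set" and q0 F R where A: "lowjfa Sig Q q0 F R"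
    and L: "?L = lowj_lang Sig Q q0 F R" unfolding LOWJ_def by blast
  have mem: "w \<in> ?L \<longleftrightarrow> w \<in> lists Sig \<and> acc Sig F R w q0" for w
    unfolding L lowj_lang_def acc_def by blast
  have "replicate 1 0 @ replicate 1 1 \<in> ?L" by (rule RW_in)
  then have "[0,1] \<in> lists Sig" using mem by simp
  then have sub: "lists {0,1} \<subseteq> lists Sig" and s01: "0 \<in> Sig" "1 \<in> Sig" by auto
  have claim: "\<exists>p\<in>Q. \<forall>w\<in>lists {0,1}. (w @ replicate n 1 \<in> ?L) \<longleftrightarrow> acc Sig F R w p" for n
  proof (induction n)
    case 0
    have "q0 \<in> Q" using A unfolding lowjfa_def by blast
    moreover have "\<forall>w\<in>lists {0,1}. (w @ replicate 0 1 \<in> ?L) \<longleftrightarrow> acc Sig F R w q0"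
    proof
      fix w :: "nat list" assume "w \<in> lists {0,1}"
      then have "w \<in> lists Sig" using sub by blast
      then show "(w @ replicate 0 1 \<in> ?L) \<longleftrightarrow> acc Sig F R w q0" using mem by simp
    qed
    ultimately show ?case by blast
  next
    case (Suc n)
    then obtain p where p: "p \<in> Q" "\<forall>w\<in>lists {0,1}. (w @ replicate n 1 \<in> ?L) \<longleftrightarrow> acc Sig F R w p"
      by blast
    have one: "1 \<in> lsig R p"
    proof (rule ccontr)
      assume n1: "1 \<notin> lsig R p"
      let ?x = "replicate (Suc n) (0::nat)"
      have x01: "?x \<in> lists {0,1}" by auto
      have r: "acc Sig F R ([1] @ ?x) p \<longleftrightarrow> acc Sig F R (?x @ [1]) p"
        by (rule acc_rot) (use n1 sub x01 s01 in auto)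
      have a1: "\<not> (([1] @ ?x) @ replicate n 1 \<in> ?L)" using RW_notin bad2 by simp
      have m1: "[1] @ ?x \<in> lists {0,1}" by auto
      have c1: "\<not> acc Sig F R ([1] @ ?x) p" using p(2) a1 m1 by blast
      have a2: "(?x @ [1]) @ replicate n 1 \<in> ?L"
        using RW_in[of "Suc n"] by (simp add: replicate_append_same)
      have m2: "?x @ [1] \<in> lists {0,1}" by auto
      have c2: "acc Sig F R (?x @ [1]) p" using p(2) a2 m2 by blast
      show False using r c1 c2 by simp
    qed
    then obtain q where q: "(q, 1, p) \<in> R" unfolding lsig_def by blast
    have qQ: "q \<in> Q" using q A unfolding lowjfa_def by blast
    have "(w @ replicate (Suc n) 1 \<in> ?L) \<longleftrightarrow> acc Sig F R w q" if w: "w \<in> lists {0,1}" for w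
    proof -
      have e: "w @ replicate (Suc n) 1 = (w @ [1]) @ replicate n 1" by simp
      have w1: "w @ [1] \<in> lists {0,1}" using w by simp
      have "((w @ [1]) @ replicate n 1 \<in> ?L) \<longleftrightarrow> acc Sig F R (w @ [1]) p" using p(2) w1 by blast
      then have "(w @ replicate (Suc n) 1 \<in> ?L) \<longleftrightarrow> acc Sig F R (w @ [1]) p" by (subst e)
      also have "\<dots> \<longleftrightarrow> acc Sig F R w q" by (rule acc_last[OF A one q]) (use w sub in auto)
      finally show ?thesis .
    qed
    then show ?case using qQ by blast
  qed
  then obtain f where f: "\<And>n. f n \<in> Q" "\<And>n. \<forall>w\<in>lists {0,1}. (w @ replicate n 1 \<in> ?L) \<longleftrightarrow> acc Sig F R w (f n)"
    by metis
  have "\<not> inj f"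
  proof
    assume "inj f"
    have "finite Q" using A unfolding lowjfa_def by blast
    moreover have "range f \<subseteq> Q" using f(1) by auto
    ultimately have "finite (range f)" using finite_subset by blast
    then have "finite (UNIV :: nat set)" using \<open>inj f\<close> finite_imageD by blast
    then show False by simp
  qed
  then obtain m n where mn: "m \<noteq> n" "f m = f n" unfolding inj_def by blast
  let ?w = "replicate m (0::nat)"
  have w01: "?w \<in> lists {0,1}" by auto
  have "?w @ replicate m 1 \<in> ?L" by (rule RW_in)
  then have "acc Sig F R ?w (f m)" using f(2) w01 by blast
  then have "acc Sig F R ?w (f n)" using mn by simp
  then have "?w @ replicate n 1 \<in> ?L" using f(2) w01 by blast
  moreover have "?w @ replicate n 1 \<notin> ?L" using RW_notin bad1 mn(1) by blast
  ultimately show False by blast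
qed



definition conv :: "('s \<times> 'a \<times> 's) set \<Rightarrow> ('s \<times> 'a list \<times> 's) set" where
  "conv R = (\<lambda>(q, a, p). (q, [a], p)) ` R"

lemma sublist_single: "sublist [a] u \<longleftrightarrow> a \<in> set u"
  unfolding sublist_def by (metis append_Cons append_Nil in_set_conv_decomp)

lemma conv_mem: "(q, x, p) \<in> conv R \<longleftrightarrow> (\<exists>a. x = [a] \<and> (q, a, p) \<in> R)"
  unfolding conv_def by force

lemma nf_conv: "no_factor (gsig (conv R) p) u \<longleftrightarrow> set u \<inter> lsig R p = {}"
proof -
  have "gsig (conv R) p = (\<lambda>a. [a]) ` lsig R p"
    unfolding gsig_def lsig_def conv_mem by auto
  then show ?thesis unfolding no_factor_def by (auto simp: sublist_single)
qed

lemma ov: "\<not> (\<exists>u1 u2 x1 x2. u1 \<noteq> [] \<and> x2 \<noteq> [] \<and> u = u1 @ u2 \<and> [a] = x1 @ x2 \<and> x2 @ u1 = [a])"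
proof
  assume "\<exists>u1 u2 x1 x2. u1 \<noteq> [] \<and> x2 \<noteq> [] \<and> u = u1 @ u2 \<and> [a] = x1 @ x2 \<and> x2 @ u1 = [a]"
  then obtain u1 x2 where h: "u1 \<noteq> []" "x2 \<noteq> []" "x2 @ u1 = [a]" by blast
  then have "length (x2 @ u1) \<ge> 2" by (cases x2; cases u1) auto
  then show False using h(3) by simp
qed

lemma conv_step1:
  assumes "(q, a, p) \<in> R" "t \<in> lists Sig" "u \<in> lists Sig" "v \<in> lists Sig" "set u \<inter> lsig R p = {}"
  shows "gl_step Sig (conv R) (v @ [a] @ u, p, t) (v, q, u @ t)"
  unfolding gl_step_def
  apply (rule disjI1)
  apply (rule exI[of _ q], rule exI[of _ "[a]"], rule exI[of _ p], rule exI[of _ t], rule exI[of _ u], rule exI[of _ v])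
  using assms ov[of u a] by (simp add: conv_mem nf_conv)

lemma conv_step2:
  assumes "x \<noteq> []" "x \<in> lists Sig" "y \<in> lists Sig" "set y \<inter> lsig R p = {}"
  shows "gl_step Sig (conv R) (y, p, x) (y @ x, p, [])"
  unfolding gl_step_def
  apply (rule disjI2)
  using assms by (simp add: nf_conv)

lemma conv_stepE:
  assumes "gl_step Sig (conv R) c c'"
  obtains (one) q a p t u v where "(q, a, p) \<in> R" "t \<in> lists Sig" "u \<in> lists Sig" "v \<in> lists Sig"
        "set u \<inter> lsig R p = {}" "c = (v @ [a] @ u, p, t)" "c' = (v, q, u @ t)"
   | (two) p x y where "x \<noteq> []" "x \<in> lists Sig" "y \<in> lists Sig" "set y \<inter> lsig R p = {}"
        "c = (y, p, x)" "c' = (y @ x, p, [])"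
  using assms unfolding gl_step_def
proof (elim disjE exE conjE)
  fix q x p t u v
  assume h: "(q, x, p) \<in> conv R" "t \<in> lists Sig" "u \<in> lists Sig" "v \<in> lists Sig"
    "no_factor (gsig (conv R) p) u" "c = (v @ x @ u, p, t)" "c' = (v, q, u @ t)"
  from h(1) obtain a where "x = [a]" "(q, a, p) \<in> R" unfolding conv_mem by blast
  then show thesis using one h nf_conv by metis
next
  fix p x y
  assume h: "x \<noteq> []" "x \<in> lists Sig" "y \<in> lists Sig" "no_factor (gsig (conv R) p) y"
    "c = (y, p, x)" "c' = (y @ x, p, [])"
  then show thesis using two nf_conv by metis
qed

lemma G2L:
  assumes "(gl_step Sig (conv R))\<^sup>*\<^sup>* c d" "d = ([], qf, [])"
  shows "(lowj_step Sig R)\<^sup>*\<^sup>* (snd (snd c) @ fst c, fst (snd c)) ([], qf)"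
  using assms
proof (induction rule: converse_rtranclp_induct)
  case base then show ?case by simp
next
  case (step y z)
  from step(1) show ?case
  proof (cases rule: conv_stepE)
    case (one q a p t u v)
    have IH: "(lowj_step Sig R)\<^sup>*\<^sup>* ((u @ t) @ v, q) ([], qf)" using step(3,4) one by simp
    have "lowj_step Sig R (t @ v @ [a] @ u, p) ((u @ t) @ v, q)"
      unfolding lowj_step_def
      apply (rule exI[of _ q], rule exI[of _ a], rule exI[of _ p], rule exI[of _ u], rule exI[of _ "t @ v"])
      using one by auto
    then show ?thesis using IH one by (simp add: converse_rtranclp_into_rtranclp)
  next
    case (two p x Y)
    have IH: "(lowj_step Sig R)\<^sup>*\<^sup>* (Y @ x, p) ([], qf)" using step(3,4) two by simp
    have ne: "Y @ x \<noteq> []" using two by simp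
    from IH obtain c'' where c'': "lowj_step Sig R (Y @ x, p) c''" "(lowj_step Sig R)\<^sup>*\<^sup>* c'' ([], qf)"
      by (cases rule: converse_rtranclpE) (use ne in auto)
    have "lowj_step Sig R (x @ Y, p) c''" using rot[of Y R p Sig x c''] two c''(1) by blast
    then show ?thesis using c''(2) two by (simp add: converse_rtranclp_into_rtranclp)
  qed
qed

lemma one_step:
  assumes "(q, a, p) \<in> R" "X \<in> lists (Sig - lsig R p)" "r @ l = Y @ [a] @ X"
    "set l \<inter> lsig R p \<noteq> {}" "l \<in> lists Sig" "r \<in> lists Sig"
  shows "\<exists>v. gl_step Sig (conv R) (l, p, r) (v, q, X @ r) \<and> r @ v = Y \<and> v \<in> lists Sig"
proof -
  from assms(3) have "r @ l = (Y @ [a]) @ X" by simp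
  then consider us where "r = (Y @ [a]) @ us" "us @ l = X" | us where "r @ us = Y @ [a]" "l = us @ X"
    using append_eq_append_conv2[THEN iffD1] by metis
  then show ?thesis
  proof cases
    case 1
    then have "set l \<subseteq> set X" by auto
    then show ?thesis using assms(2,4) by auto
  next
    case 2
    have "us \<noteq> []" using 2 assms(2,4) by auto
    have uu: "us = butlast us @ [last us]" using \<open>us \<noteq> []\<close> by simp
    have "(r @ butlast us) @ [last us] = Y @ [a]" using 2(1) uu by (metis append_assoc)
    then have "r @ butlast us = Y" "last us = a" unfolding append1_eq_conv by simp_all
    then obtain v where v: "us = v @ [a]" "r @ v = Y" using uu by metis
    have l: "l = v @ [a] @ X" using 2 v by simp
    have vS: "v \<in> lists Sig" using assms(5) l by auto
    have XS: "X \<in> lists Sig" using assms(2) by auto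
    have dj: "set X \<inter> lsig R p = {}" using assms(2) by auto
    have "gl_step Sig (conv R) (v @ [a] @ X, p, r) (v, q, X @ r)"
      by (rule conv_step1[OF assms(1) assms(6) XS vS dj])
    then show ?thesis using l v vS by blast
  qed
qed

lemma L2G:
  assumes "(lowj_step Sig R)\<^sup>*\<^sup>* (W, p) (W', q')" "W' = []"
  shows "\<forall>l r. W = r @ l \<longrightarrow> l \<in> lists Sig \<longrightarrow> r \<in> lists Sig \<longrightarrow>
           (gl_step Sig (conv R))\<^sup>*\<^sup>* (l, p, r) ([], q', [])"
  using assms
proof (induction rule: converse_rtranclp_induct2)
  case refl then show ?case by simp
next
  case (step W p W2 q)
  from step(1) obtain a X Y where st: "(q, a, p) \<in> R" "X \<in> lists (Sig - lsig R p)" "Y \<in> lists Sig"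
    "W = Y @ [a] @ X" "W2 = X @ Y" unfolding lowj_step_def by blast
  have al: "a \<in> lsig R p" using st(1) unfolding lsig_def by blast
  have IH: "\<And>l r. W2 = r @ l \<Longrightarrow> l \<in> lists Sig \<Longrightarrow> r \<in> lists Sig \<Longrightarrow>
           (gl_step Sig (conv R))\<^sup>*\<^sup>* (l, q, r) ([], q', [])" using step(3,4) by blast
  show ?case
  proof (intro allI impI)
    fix l r assume h: "W = r @ l" "l \<in> lists Sig" "r \<in> lists Sig"
    show "(gl_step Sig (conv R))\<^sup>*\<^sup>* (l, p, r) ([], q', [])"
    proof (cases "set l \<inter> lsig R p = {}")
      case False
      have e: "r @ l = Y @ [a] @ X" using h(1) st(4) by simp
      from one_step[OF st(1,2) e False h(2,3)] obtain v where
        v: "gl_step Sig (conv R) (l, p, r) (v, q, X @ r)" "r @ v = Y" "v \<in> lists Sig" by auto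
      have "W2 = (X @ r) @ v" using st(5) v(2) by simp
      moreover have "X @ r \<in> lists Sig" using st(2) h(3) by auto
      ultimately have "(gl_step Sig (conv R))\<^sup>*\<^sup>* (v, q, X @ r) ([], q', [])" using IH v(3) by blast
      then show ?thesis using v(1) by (simp add: converse_rtranclp_into_rtranclp)
    next
      case True
      have "a \<in> set W" using st(4) by simp
      then have "a \<in> set (r @ l)" using h(1) by simp
      then have rne: "r \<noteq> []" using True al by auto
      have s1: "gl_step Sig (conv R) (l, p, r) (l @ r, p, [])"
        by (rule conv_step2[OF rne h(3) h(2) True])
      have "lowj_step Sig R (r @ l, p) (W2, q)" using step(1) h(1) by simp
      then have "lowj_step Sig R (l @ r, p) (W2, q)" using rot[OF True h(2,3)] by blast
      then obtain a' X' Y' where st': "(q, a', p) \<in> R" "X' \<in> lists (Sig - lsig R p)"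
        "l @ r = Y' @ [a'] @ X'" "W2 = X' @ Y'" unfolding lowj_step_def by blast
      have "a' \<in> lsig R p" using st'(1) unfolding lsig_def by blast
      then have ne: "set (l @ r) \<inter> lsig R p \<noteq> {}" using st'(3) by auto
      have lr: "l @ r \<in> lists Sig" using h by simp
      have e': "[] @ (l @ r) = Y' @ [a'] @ X'" using st'(3) by simp
      from one_step[OF st'(1,2) e' ne lr] obtain v where
        v: "gl_step Sig (conv R) (l @ r, p, []) (v, q, X' @ [])" "[] @ v = Y'" "v \<in> lists Sig" by auto
      have "W2 = (X' @ []) @ v" using st'(4) v(2) by simp
      moreover have "X' @ [] \<in> lists Sig" using st'(2) by auto
      ultimately have "(gl_step Sig (conv R))\<^sup>*\<^sup>* (v, q, X' @ []) ([], q', [])" using IH v(3) by blast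
      then show ?thesis using v(1) s1 by (meson converse_rtranclp_into_rtranclp)
    qed
  qed
qed

lemma lang_eq: "gl_lang Sig Q q0 F (conv R) = lowj_lang Sig Q q0 F R"
proof (intro set_eqI iffI)
  fix w assume "w \<in> gl_lang Sig Q q0 F (conv R)"
  then obtain qf where g: "w \<in> lists Sig" "qf \<in> F" "(gl_step Sig (conv R))\<^sup>*\<^sup>* (w, q0, []) ([], qf, [])"
    unfolding gl_lang_def by blast
  have "(lowj_step Sig R)\<^sup>*\<^sup>* ([] @ w, q0) ([], qf)" using G2L[OF g(3) refl] by simp
  then have "(lowj_step Sig R)\<^sup>*\<^sup>* (w, q0) ([], qf)" by simp
  then show "w \<in> lowj_lang Sig Q q0 F R" using g(1,2) unfolding lowj_lang_def by blast
next
  fix w assume "w \<in> lowj_lang Sig Q q0 F R"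
  then obtain qf where h: "w \<in> lists Sig" "qf \<in> F" "(lowj_step Sig R)\<^sup>*\<^sup>* (w, q0) ([], qf)"
    unfolding lowj_lang_def by blast
  have "(gl_step Sig (conv R))\<^sup>*\<^sup>* (w, q0, []) ([], qf, [])" using L2G[OF h(3) refl, rule_format, of "[]" w] h(1) by simp
  then show "w \<in> gl_lang Sig Q q0 F (conv R)" using h(1,2) unfolding gl_lang_def by blast
qed

lemma conv_auto:
  assumes "lowjfa Sig Q q0 F R"
  shows "gllowjfa Sig Q q0 F (conv R)"
proof -
  have R: "R \<subseteq> Q \<times> Sig \<times> Q" "finite Q" "finite Sig" using assms unfolding lowjfa_def by auto
  then have "finite R" by (meson finite_SigmaI finite_subset)
  then have "finite (conv R)" unfolding conv_def by simp
  moreover have "conv R \<subseteq> Q \<times> (lists Sig - {[]}) \<times> Q" using R(1) unfolding conv_def by auto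
  moreover have "\<forall>p w q q'. (q, w, p) \<in> conv R \<longrightarrow> (q', w, p) \<in> conv R \<longrightarrow> q = q'"
  proof (intro allI impI)
    fix p w q q' assume "(q, w, p) \<in> conv R" "(q', w, p) \<in> conv R"
    then obtain a b where "w = [a]" "(q, a, p) \<in> R" "w = [b]" "(q', b, p) \<in> R" unfolding conv_mem by blast
    then have "(q, a, p) \<in> R" "(q', a, p) \<in> R" by auto
    then show "q = q'" using assms unfolding lowjfa_def by blast
  qed
  moreover have "q0 \<in> Q" "F \<subseteq> Q" using assms unfolding lowjfa_def by auto
  ultimately show ?thesis using R(2,3) unfolding gllowjfa_def by blast
qed

lemma LOWJ_sub: "LOWJ \<subseteq> GLLOWJ"
proof
  fix L assume "L \<in> LOWJ"
  then have "\<exists>Sig (Q :: nat set) q0 F R. lowjfa Sig Q q0 F R \<and> L = lowj_lang Sig Q q0 F R"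
    unfolding LOWJ_def mem_Collect_eq .
  then obtain Sig and Q :: "nat set" and q0 F R where A: "lowjfa Sig Q q0 F R"
    and L: "L = lowj_lang Sig Q q0 F R" by (elim exE conjE)
  have e: "L = gl_lang Sig Q q0 F (conv R)" unfolding L lang_eq ..
  show "L \<in> GLLOWJ" unfolding GLLOWJ_def mem_Collect_eq
    by (rule exI[of _ Sig], rule exI[of _ Q], rule exI[of _ q0], rule exI[of _ F], rule exI[of _ "conv R"])
       (use conv_auto[OF A] e in blast)
qed


theorem lemma3:
  shows "(\<exists>L :: nat list set. L \<in> GLLOWJ \<and> L \<notin> LOWJ) \<and> (LOWJ :: nat list set set) \<subset> GLLOWJ"
proof -
  have w: "gl_lang {0,1} {0} 0 {0} RW \<in> GLLOWJ" "gl_lang {0,1} {0} 0 {0} RW \<notin> (LOWJ :: nat list set set)"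
    using RW_GL not_lowj by auto
  have "(LOWJ :: nat list set set) \<subseteq> GLLOWJ" by (rule LOWJ_sub)
  then show ?thesis using w by blast
qed

end
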